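(* We have $\mathcal{P}(\mathrm{Cr}_2)=\mathcal{AM}(\mathrm{Cr}_2)$, and $\mathcal{P}(\mathrm{Cr}_n)\ne\mathcal{AM}(\mathrm{Cr}_n)$ for all $n>2$.
   Context: For $n\ge2$, the $n$-crown $\mathrm{Cr}_n$ is the poset $\{x_1,\dots,x_n,y_1,\dots,y_n\}$ whose only relations between distinct elements are $x_i<y_i$ ($1\le i\le n$), $x_{i+1}<y_i$ ($1\le i\le n-1$) and $x_1<y_n$. For a finite connected poset $X$ and $x<y$, $e_{xy}$ denotes the incidence-algebra basis element, and $B=\{e_{xy}:x<y\}$. $\mathcal{C}(X)$ is the set of maximal chains. For a bijection $\theta:B\to B$ and $C:u_1<\dots<u_m$ in $\mathcal{C}(X)$, $\theta$ is increasing on $C$ if there is $D:v_1<\dots<v_m$ in $\mathcal{C}(X)$ with $\theta(e_{u_iu_j})=e_{v_iv_j}$ for all $i<j$, decreasing if $\theta(e_{u_iu_j})=e_{v_{m-j+1}v_{m-i+1}}$ for all $i<j$. $\mathcal{M}(X)$: bijections $B\to B$ increasing or decreasing on every maximal chain. A walk is a sequence $u_0,\dots,u_m$ where for each $i$ one of $u_i,u_{i+1}$ covers the other; closed if $u_0=u_m$. For a closed walk $\Gamma:u_0,\dots,u_m=u_0$ and $z\in X$: $s^+_{\theta,\Gamma}(z)=|\{i: u_i<u_{i+1},\ \exists w>z,\ \theta(e_{zw})=e_{u_iu_{i+1}}\}|$, $s^-_{\theta,\Gamma}(z)=|\{i: u_i>u_{i+1},\ \exists w>z,\ \theta(e_{zw})=e_{u_{i+1}u_i}\}|$,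 $t^+_{\theta,\Gamma}(z)=|\{i: u_i<u_{i+1},\ \exists w<z,\ \theta(e_{wz})=e_{u_iu_{i+1}}\}|$, $t^-_{\theta,\Gamma}(z)=|\{i: u_i>u_{i+1},\ \exists w<z,\ \theta(e_{wz})=e_{u_{i+1}u_i}\}|$, $0\le i\le m-1$. $\theta$ is admissible if $s^+-s^-=t^+-t^-$ at every $z$ for every closed walk; $\mathcal{AM}(X)$ is the set of admissible elements of $\mathcal{M}(X)$. $\theta:B\to B$ is proper if there is an automorphism $\lambda$ of $X$ with $\theta(e_{xy})=e_{\lambda(x)\lambda(y)}$ for all $x<y$, or an anti-automorphism $\lambda$ with $\theta(e_{xy})=e_{\lambda(y)\lambda(x)}$ for all $x<y$; $\mathcal{P}(X)$ is the set of proper bijections. *)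

theory Defs
  imports "HOL-Library.FuncSet"
begin

text \<open>A finite poset is given by a carrier X and a strict order lt.
 The basis element e_xy (x < y) is represented by the pair (x,y).\<close>

definition basis :: "'a set \<Rightarrow> ('a \<Rightarrow> 'a \<Rightarrow> bool) \<Rightarrow> ('a \<times> 'a) set" where
  "basis X lt = {(x,y). x \<in> X \<and> y \<in> X \<and> lt x y}"

definition is_chain :: "'a set \<Rightarrow> ('a \<Rightarrow> 'a \<Rightarrow> bool) \<Rightarrow> 'a list \<Rightarrow> bool" where
  "is_chain X lt C \<longleftrightarrow> set C \<subseteq> X \<and> sorted_wrt lt C"

definition max_chain :: "'a set \<Rightarrow> ('a \<Rightarrow> 'a \<Rightarrow> bool) \<Rightarrow> 'a list \<Rightarrow> bool" where
  "max_chain X lt C \<longleftrightarrow> C \<noteq> [] \<and> is_chain X lt C \<and>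
     \<not> (\<exists>C'. is_chain X lt C' \<and> set C \<subset> set C')"

definition increasing_on :: "'a set \<Rightarrow> ('a \<Rightarrow> 'a \<Rightarrow> bool) \<Rightarrow> ('a \<times> 'a \<Rightarrow> 'a \<times> 'a) \<Rightarrow> 'a list \<Rightarrow> bool" where
  "increasing_on X lt \<theta> C \<longleftrightarrow> (\<exists>D. max_chain X lt D \<and> length D = length C \<and>
     (\<forall>i j. i < j \<and> j < length C \<longrightarrow> \<theta> (C!i, C!j) = (D!i, D!j)))"

definition decreasing_on :: "'a set \<Rightarrow> ('a \<Rightarrow> 'a \<Rightarrow> bool) \<Rightarrow> ('a \<times> 'a \<Rightarrow> 'a \<times> 'a) \<Rightarrow> 'a list \<Rightarrow> bool" where
  "decreasing_on X lt \<theta> C \<longleftrightarrow> (\<exists>D. max_chain X lt D \<and> length D = length C \<and>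
     (\<forall>i j. i < j \<and> j < length C \<longrightarrow>
        \<theta> (C!i, C!j) = (D!(length C - 1 - j), D!(length C - 1 - i))))"

definition bijB :: "'a set \<Rightarrow> ('a \<Rightarrow> 'a \<Rightarrow> bool) \<Rightarrow> ('a \<times> 'a \<Rightarrow> 'a \<times> 'a) set" where
  "bijB X lt = {\<theta>. bij_betw \<theta> (basis X lt) (basis X lt) \<and> \<theta> \<in> extensional (basis X lt)}"

definition Mset :: "'a set \<Rightarrow> ('a \<Rightarrow> 'a \<Rightarrow> bool) \<Rightarrow> ('a \<times> 'a \<Rightarrow> 'a \<times> 'a) set" where
  "Mset X lt = {\<theta> \<in> bijB X lt. \<forall>C. max_chain X lt C \<longrightarrow>
      increasing_on X lt \<theta> C \<or> decreasing_on X lt \<theta> C}"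

definition covers :: "'a set \<Rightarrow> ('a \<Rightarrow> 'a \<Rightarrow> bool) \<Rightarrow> 'a \<Rightarrow> 'a \<Rightarrow> bool" where
  "covers X lt x y \<longleftrightarrow> x \<in> X \<and> y \<in> X \<and> lt x y \<and> \<not> (\<exists>z\<in>X. lt x z \<and> lt z y)"

definition closed_walk :: "'a set \<Rightarrow> ('a \<Rightarrow> 'a \<Rightarrow> bool) \<Rightarrow> 'a list \<Rightarrow> bool" where
  "closed_walk X lt W \<longleftrightarrow> W \<noteq> [] \<and> set W \<subseteq> X \<and> hd W = last W \<and>
     (\<forall>i. Suc i < length W \<longrightarrow> covers X lt (W!i) (W!Suc i) \<or> covers X lt (W!Suc i) (W!i))"

definition s_plus where
  "s_plus X lt \<theta> W z = card {i. Suc i < length W \<and> lt (W!i) (W!Suc i) \<and>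
      (\<exists>w\<in>X. lt z w \<and> \<theta> (z,w) = (W!i, W!Suc i))}"
definition s_minus where
  "s_minus X lt \<theta> W z = card {i. Suc i < length W \<and> lt (W!Suc i) (W!i) \<and>
      (\<exists>w\<in>X. lt z w \<and> \<theta> (z,w) = (W!Suc i, W!i))}"
definition t_plus where
  "t_plus X lt \<theta> W z = card {i. Suc i < length W \<and> lt (W!i) (W!Suc i) \<and>
      (\<exists>w\<in>X. lt w z \<and> \<theta> (w,z) = (W!i, W!Suc i))}"
definition t_minus where
  "t_minus X lt \<theta> W z = card {i. Suc i < length W \<and> lt (W!Suc i) (W!i) \<and>
      (\<exists>w\<in>X. lt w z \<and> \<theta> (w,z) = (W!Suc i, W!i))}"

definition admissible :: "'a set \<Rightarrow> ('a \<Rightarrow> 'a \<Rightarrow> bool) \<Rightarrow> ('a \<times> 'a \<Rightarrow> 'a \<times> 'a) \<Rightarrow> bool" where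
  "admissible X lt \<theta> \<longleftrightarrow> (\<forall>W. closed_walk X lt W \<longrightarrow> (\<forall>z\<in>X.
      int (s_plus X lt \<theta> W z) - int (s_minus X lt \<theta> W z) =
      int (t_plus X lt \<theta> W z) - int (t_minus X lt \<theta> W z)))"

definition AMset :: "'a set \<Rightarrow> ('a \<Rightarrow> 'a \<Rightarrow> bool) \<Rightarrow> ('a \<times> 'a \<Rightarrow> 'a \<times> 'a) set" where
  "AMset X lt = {\<theta> \<in> Mset X lt. admissible X lt \<theta>}"

definition Pset :: "'a set \<Rightarrow> ('a \<Rightarrow> 'a \<Rightarrow> bool) \<Rightarrow> ('a \<times> 'a \<Rightarrow> 'a \<times> 'a) set" where
  "Pset X lt = {\<theta> \<in> bijB X lt.
     (\<exists>\<phi>. bij_betw \<phi> X X \<and> (\<forall>x\<in>X. \<forall>y\<in>X. lt x y \<longleftrightarrow> lt (\<phi> x) (\<phi> y)) \<and>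
          (\<forall>x\<in>X. \<forall>y\<in>X. lt x y \<longrightarrow> \<theta> (x,y) = (\<phi> x, \<phi> y))) \<or>
     (\<exists>\<phi>. bij_betw \<phi> X X \<and> (\<forall>x\<in>X. \<forall>y\<in>X. lt x y \<longleftrightarrow> lt (\<phi> y) (\<phi> x)) \<and>
          (\<forall>x\<in>X. \<forall>y\<in>X. lt x y \<longrightarrow> \<theta> (x,y) = (\<phi> y, \<phi> x)))}"

text \<open>The n-crown: x_i = (i, False), y_i = (i, True), 1 \<le> i \<le> n.\<close>
definition crown_X :: "nat \<Rightarrow> (nat \<times> bool) set" where
  "crown_X n = {(i,b). 1 \<le> i \<and> i \<le> n}"

definition crown_less :: "nat \<Rightarrow> nat \<times> bool \<Rightarrow> nat \<times> bool \<Rightarrow> bool" where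
  "crown_less n a b \<longleftrightarrow> a \<in> crown_X n \<and> b \<in> crown_X n \<and> \<not> snd a \<and> snd b \<and>
     (fst a = fst b \<or> fst a = fst b + 1 \<or> (fst a = 1 \<and> fst b = n))"

end

theory Submission
  imports Defs
begin

lemma card_steps:
  fixes U :: "nat \<Rightarrow> bool"
  shows "(\<Sum>i<length W - 1. (of_bool (U i) :: int)) = int (card {i. Suc i < length W \<and> U i})"
proof -
  have "{..<length W - 1} \<inter> {x. U x} = {i. Suc i < length W \<and> U i}" by auto
  then show ?thesis by simp
qed

lemma cut_lemma:
  fixes g :: "'a \<Rightarrow> int"
  assumes cw: "closed_walk X lt W" and asym: "\<And>a b. lt a b \<Longrightarrow> \<not> lt b a"
  and gP: "\<And>a b. a\<in>X \<Longrightarrow> b\<in>X \<Longrightarrow> lt a b \<Longrightarrow> g b - g a = of_bool (P a b) - of_bool (Q a b)"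
  shows "int (card {i. Suc i < length W \<and> lt (W!i) (W!Suc i) \<and> P (W!i) (W!Suc i)})
       - int (card {i. Suc i < length W \<and> lt (W!Suc i) (W!i) \<and> P (W!Suc i) (W!i)})
       = int (card {i. Suc i < length W \<and> lt (W!i) (W!Suc i) \<and> Q (W!i) (W!Suc i)})
       - int (card {i. Suc i < length W \<and> lt (W!Suc i) (W!i) \<and> Q (W!Suc i) (W!i)})"
proof -
  define m where "m = length W - 1"
  have ne: "W \<noteq> []" and hl: "hd W = last W" and sub: "set W \<subseteq> X"
    and stp: "\<And>i. Suc i < length W \<Longrightarrow> covers X lt (W!i) (W!Suc i) \<or> covers X lt (W!Suc i) (W!i)"
    using cw unfolding closed_walk_def by auto
  have step: "g (W!Suc i) - g (W!i) =
      of_bool (lt (W!i) (W!Suc i) \<and> P (W!i) (W!Suc i)) - of_bool (lt (W!Suc i) (W!i) \<and> P (W!Suc i) (W!i))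
    - (of_bool (lt (W!i) (W!Suc i) \<and> Q (W!i) (W!Suc i)) - of_bool (lt (W!Suc i) (W!i) \<and> Q (W!Suc i) (W!i)))"
    if i: "i < m" for i
  proof -
    have si: "Suc i < length W" using i m_def by auto
    then have inX: "W!i \<in> X" "W!Suc i \<in> X" using sub by auto
    from stp[OF si] have "lt (W!i) (W!Suc i) \<or> lt (W!Suc i) (W!i)" unfolding covers_def by auto
    then show ?thesis
    proof
      assume l: "lt (W!i) (W!Suc i)"
      then have "\<not> lt (W!Suc i) (W!i)" using asym by blast
      then show ?thesis using l gP[OF inX l] by simp
    next
      assume l: "lt (W!Suc i) (W!i)"
      then have "\<not> lt (W!i) (W!Suc i)" using asym by blast
      then show ?thesis using l gP[OF inX(2,1) l] by simp
    qed
  qed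
  have "(\<Sum>i<m. g (W!Suc i) - g (W!i)) = g (W!m) - g (W!0)"
    by (rule sum_lessThan_telescope)
  also have "W!m = last W" using ne m_def by (simp add: last_conv_nth)
  also have "W!0 = hd W" using ne by (simp add: hd_conv_nth)
  finally have tel: "(\<Sum>i<m. g (W!Suc i) - g (W!i)) = 0" using hl by simp
  have "(\<Sum>i<m. g (W!Suc i) - g (W!i)) =
     (\<Sum>i<m. of_bool (lt (W!i) (W!Suc i) \<and> P (W!i) (W!Suc i)))
   - (\<Sum>i<m. of_bool (lt (W!Suc i) (W!i) \<and> P (W!Suc i) (W!i)))
   - ((\<Sum>i<m. of_bool (lt (W!i) (W!Suc i) \<and> Q (W!i) (W!Suc i)))
   - (\<Sum>i<m. of_bool (lt (W!Suc i) (W!i) \<and> Q (W!Suc i) (W!i))))"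
    by (simp add: step sum_subtractf)
  then show ?thesis using tel unfolding m_def card_steps by simp
qed

lemma adm_from_cuts:
  assumes asym: "\<And>a b. lt a b \<Longrightarrow> \<not> lt b a"
  and cuts: "\<And>z. z\<in>X \<Longrightarrow> \<exists>g::'a\<Rightarrow>int. \<forall>a\<in>X. \<forall>b\<in>X. lt a b \<longrightarrow> g b - g a =
     of_bool (\<exists>w\<in>X. lt z w \<and> \<theta> (z,w) = (a,b)) - of_bool (\<exists>w\<in>X. lt w z \<and> \<theta> (w,z) = (a,b))"
  shows "admissible X lt \<theta>"
  unfolding admissible_def s_plus_def s_minus_def t_plus_def t_minus_def
proof (intro allI impI ballI)
  fix W z assume cw: "closed_walk X lt W" and z: "z \<in> X"
  from cuts[OF z] obtain g :: "'a \<Rightarrow> int" where g: "\<forall>a\<in>X. \<forall>b\<in>X. lt a b \<longrightarrow> g b - g a =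
     of_bool (\<exists>w\<in>X. lt z w \<and> \<theta> (z,w) = (a,b)) - of_bool (\<exists>w\<in>X. lt w z \<and> \<theta> (w,z) = (a,b))" by blast
  show "int (card {i. Suc i < length W \<and> lt (W ! i) (W ! Suc i) \<and> (\<exists>w\<in>X. lt z w \<and> \<theta> (z, w) = (W ! i, W ! Suc i))}) -
        int (card {i. Suc i < length W \<and> lt (W ! Suc i) (W ! i) \<and> (\<exists>w\<in>X. lt z w \<and> \<theta> (z, w) = (W ! Suc i, W ! i))}) =
        int (card {i. Suc i < length W \<and> lt (W ! i) (W ! Suc i) \<and> (\<exists>w\<in>X. lt w z \<and> \<theta> (w, z) = (W ! i, W ! Suc i))}) -
        int (card {i. Suc i < length W \<and> lt (W ! Suc i) (W ! i) \<and> (\<exists>w\<in>X. lt w z \<and> \<theta> (w, z) = (W ! Suc i, W ! i))})"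
    by (rule cut_lemma[OF cw asym, where g=g and P="\<lambda>a b. \<exists>w\<in>X. lt z w \<and> \<theta> (z,w) = (a,b)"
          and Q="\<lambda>a b. \<exists>w\<in>X. lt w z \<and> \<theta> (w,z) = (a,b)"]) (use g in auto)
qed

lemma proper_adm:
  assumes asym: "\<And>a b. lt a b \<Longrightarrow> \<not> lt b a"
  and th: "\<theta> \<in> Pset X lt"
  shows "admissible X lt \<theta>"
proof -
  from th consider
    (aut) \<phi> where "bij_betw \<phi> X X" "\<forall>x\<in>X. \<forall>y\<in>X. lt x y \<longleftrightarrow> lt (\<phi> x) (\<phi> y)"
          "\<forall>x\<in>X. \<forall>y\<in>X. lt x y \<longrightarrow> \<theta> (x,y) = (\<phi> x, \<phi> y)"
  | (anti) \<phi> where "bij_betw \<phi> X X" "\<forall>x\<in>X. \<forall>y\<in>X. lt x y \<longleftrightarrow> lt (\<phi> y) (\<phi> x)"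
          "\<forall>x\<in>X. \<forall>y\<in>X. lt x y \<longrightarrow> \<theta> (x,y) = (\<phi> y, \<phi> x)"
    unfolding Pset_def by blast
  then show ?thesis
  proof cases
    case aut
    show ?thesis
    proof (rule adm_from_cuts[OF asym])
      fix z assume z: "z \<in> X"
      show "\<exists>g::'a\<Rightarrow>int. \<forall>a\<in>X. \<forall>b\<in>X. lt a b \<longrightarrow> g b - g a =
       of_bool (\<exists>w\<in>X. lt z w \<and> \<theta> (z,w) = (a,b)) - of_bool (\<exists>w\<in>X. lt w z \<and> \<theta> (w,z) = (a,b))"
      proof (intro exI[of _ "\<lambda>v. - of_bool (v = \<phi> z)"] ballI impI)
        fix a b assume a: "a \<in> X" and b: "b \<in> X" and ab: "lt a b"
        obtain a' where a': "a' \<in> X" "a = \<phi> a'" using a aut(1) unfolding bij_betw_def by auto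
        obtain b' where b': "b' \<in> X" "b = \<phi> b'" using b aut(1) unfolding bij_betw_def by auto
        have inj: "inj_on \<phi> X" using aut(1) unfolding bij_betw_def by auto
        have l: "lt a' b'" using aut(2) a' b' ab by auto
        have e1: "(\<exists>w\<in>X. lt z w \<and> \<theta> (z,w) = (a,b)) \<longleftrightarrow> a = \<phi> z"
        proof
          assume "\<exists>w\<in>X. lt z w \<and> \<theta> (z,w) = (a,b)"
          then show "a = \<phi> z" using aut(3) z by auto
        next
          assume "a = \<phi> z"
          then have "a' = z" using inj a' z by (auto dest: inj_onD)
          then show "\<exists>w\<in>X. lt z w \<and> \<theta> (z,w) = (a,b)" using l aut(3) a' b' by auto
        qed
        have e2: "(\<exists>w\<in>X. lt w z \<and> \<theta> (w,z) = (a,b)) \<longleftrightarrow> b = \<phi> z"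
        proof
          assume "\<exists>w\<in>X. lt w z \<and> \<theta> (w,z) = (a,b)"
          then show "b = \<phi> z" using aut(3) z by auto
        next
          assume "b = \<phi> z"
          then have "b' = z" using inj b' z by (auto dest: inj_onD)
          then show "\<exists>w\<in>X. lt w z \<and> \<theta> (w,z) = (a,b)" using l aut(3) a' b' by auto
        qed
        show "- of_bool (b = \<phi> z) - - of_bool (a = \<phi> z) =
          (of_bool (\<exists>w\<in>X. lt z w \<and> \<theta> (z,w) = (a,b)) - of_bool (\<exists>w\<in>X. lt w z \<and> \<theta> (w,z) = (a,b)) :: int)"
          unfolding e1 e2 by simp
      qed
    qed
  next
    case anti
    show ?thesis
    proof (rule adm_from_cuts[OF asym])
      fix z assume z: "z \<in> X"
      show "\<exists>g::'a\<Rightarrow>int. \<forall>a\<in>X. \<forall>b\<in>X. lt a b \<longrightarrow> g b - g a =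
       of_bool (\<exists>w\<in>X. lt z w \<and> \<theta> (z,w) = (a,b)) - of_bool (\<exists>w\<in>X. lt w z \<and> \<theta> (w,z) = (a,b))"
      proof (intro exI[of _ "\<lambda>v. of_bool (v = \<phi> z)"] ballI impI)
        fix a b assume a: "a \<in> X" and b: "b \<in> X" and ab: "lt a b"
        obtain a' where a': "a' \<in> X" "a = \<phi> a'" using a anti(1) unfolding bij_betw_def by auto
        obtain b' where b': "b' \<in> X" "b = \<phi> b'" using b anti(1) unfolding bij_betw_def by auto
        have inj: "inj_on \<phi> X" using anti(1) unfolding bij_betw_def by auto
        have l: "lt b' a'" using anti(2) a' b' ab by auto
        have e1: "(\<exists>w\<in>X. lt z w \<and> \<theta> (z,w) = (a,b)) \<longleftrightarrow> b = \<phi> z"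
        proof
          assume "\<exists>w\<in>X. lt z w \<and> \<theta> (z,w) = (a,b)"
          then show "b = \<phi> z" using anti(3) z by auto
        next
          assume "b = \<phi> z"
          then have "b' = z" using inj b' z by (auto dest: inj_onD)
          then show "\<exists>w\<in>X. lt z w \<and> \<theta> (z,w) = (a,b)" using l anti(3) a' b' by auto
        qed
        have e2: "(\<exists>w\<in>X. lt w z \<and> \<theta> (w,z) = (a,b)) \<longleftrightarrow> a = \<phi> z"
        proof
          assume "\<exists>w\<in>X. lt w z \<and> \<theta> (w,z) = (a,b)"
          then show "a = \<phi> z" using anti(3) z by auto
        next
          assume "a = \<phi> z"
          then have "a' = z" using inj a' z by (auto dest: inj_onD)
          then show "\<exists>w\<in>X. lt w z \<and> \<theta> (w,z) = (a,b)" using l anti(3) a' b' by auto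
        qed
        show "of_bool (b = \<phi> z) - of_bool (a = \<phi> z) =
          (of_bool (\<exists>w\<in>X. lt z w \<and> \<theta> (z,w) = (a,b)) - of_bool (\<exists>w\<in>X. lt w z \<and> \<theta> (w,z) = (a,b)) :: int)"
          unfolding e1 e2 by simp
      qed
    qed
  qed
qed


lemma crown_asym: "crown_less n a b \<Longrightarrow> \<not> crown_less n b a"
  unfolding crown_less_def by auto

lemma crown_sorted_len: "sorted_wrt (crown_less n) C \<Longrightarrow> length C \<le> 2"
proof (cases C)
  case (Cons a r)
  assume s: "sorted_wrt (crown_less n) C"
  show ?thesis
  proof (cases r)
    case (Cons b r2)
    show ?thesis
    proof (cases r2)
      case (Cons c r3)
      then have "crown_less n a b" "crown_less n b c" using s \<open>C = a # r\<close> \<open>r = b # r2\<close> by auto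
      then show ?thesis unfolding crown_less_def by auto
    qed (use Cons \<open>C = a # r\<close> in auto)
  qed (use Cons in auto)
qed auto

lemma crown_maxchain_iff:
  assumes n: "n \<ge> 1"
  shows "max_chain (crown_X n) (crown_less n) C \<longleftrightarrow> (\<exists>a b. C = [a,b] \<and> crown_less n a b)"
proof
  assume mc: "max_chain (crown_X n) (crown_less n) C"
  then have ne: "C \<noteq> []" and ch: "set C \<subseteq> crown_X n" "sorted_wrt (crown_less n) C"
    and nx: "\<not> (\<exists>C'. is_chain (crown_X n) (crown_less n) C' \<and> set C \<subset> set C')"
    unfolding max_chain_def is_chain_def by auto
  have len: "length C \<le> 2" using crown_sorted_len ch(2) .
  show "\<exists>a b. C = [a,b] \<and> crown_less n a b"
  proof (cases C)
    case Nil then show ?thesis using ne by simp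
  next
    case (Cons a r)
    show ?thesis
    proof (cases r)
      case Nil
      have aX: "a \<in> crown_X n" using ch Cons by auto
      show ?thesis
      proof (cases "snd a")
        case True
        have "is_chain (crown_X n) (crown_less n) [(fst a, False), a]"
          using aX True unfolding is_chain_def crown_less_def crown_X_def by (cases a) auto
        moreover have "set C \<subset> set [(fst a, False), a]" using Cons Nil True by (cases a) auto
        ultimately show ?thesis using nx by blast
      next
        case False
        have "is_chain (crown_X n) (crown_less n) [a, (fst a, True)]"
          using aX False unfolding is_chain_def crown_less_def crown_X_def by (cases a) auto
        moreover have "set C \<subset> set [a, (fst a, True)]" using Cons Nil False by (cases a) auto
        ultimately show ?thesis using nx by blast
      qed
    next
      case (Cons b r2)
      then have "r2 = []" using len \<open>C = a # r\<close> by auto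
      then show ?thesis using ch(2) Cons \<open>C = a # r\<close> by auto
    qed
  qed
next
  assume "\<exists>a b. C = [a,b] \<and> crown_less n a b"
  then obtain a b where C: "C = [a,b]" and ab: "crown_less n a b" by blast
  have X: "a \<in> crown_X n" "b \<in> crown_X n" "a \<noteq> b" using ab unfolding crown_less_def by auto
  have "\<not> (is_chain (crown_X n) (crown_less n) C' \<and> set C \<subset> set C')" for C'
  proof
    assume h: "is_chain (crown_X n) (crown_less n) C' \<and> set C \<subset> set C'"
    then have "length C' \<le> 2" using crown_sorted_len unfolding is_chain_def by blast
    then have "card (set C') \<le> 2" using card_length order_trans by blast
    moreover have "card (set C) < card (set C')" using h by (simp add: psubset_card_mono)
    moreover have "card (set C) = 2" using C X by simp
    ultimately show False by simp
  qed
  then show "max_chain (crown_X n) (crown_less n) C"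
    unfolding max_chain_def is_chain_def using C ab X by auto
qed

lemma crown_basis_mem: "(a,b) \<in> basis (crown_X n) (crown_less n) \<longleftrightarrow> crown_less n a b"
  unfolding basis_def crown_less_def by auto

lemma crown_Mset:
  assumes n: "n \<ge> 1" and th: "\<theta> \<in> bijB (crown_X n) (crown_less n)"
  shows "\<theta> \<in> Mset (crown_X n) (crown_less n)"
  unfolding Mset_def
proof (intro CollectI conjI th allI impI disjI1)
  fix C assume "max_chain (crown_X n) (crown_less n) C"
  then obtain a b where C: "C = [a,b]" and ab: "crown_less n a b" using crown_maxchain_iff[OF n] by blast
  have "\<theta> (a,b) \<in> basis (crown_X n) (crown_less n)"
    using th ab unfolding bijB_def bij_betw_def by (auto simp: crown_basis_mem)
  then obtain p q where pq: "\<theta> (a,b) = (p,q)" "crown_less n p q"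
    by (cases "\<theta> (a,b)") (auto simp: crown_basis_mem)
  have "max_chain (crown_X n) (crown_less n) [p,q]" using crown_maxchain_iff[OF n] pq by blast
  moreover have "\<forall>i j. i < j \<and> j < length C \<longrightarrow> \<theta> (C!i, C!j) = ([p,q]!i, [p,q]!j)"
    using C pq by (auto simp: less_Suc_eq)
  ultimately show "increasing_on (crown_X n) (crown_less n) \<theta> C"
    unfolding increasing_on_def using C by (intro exI[of _ "[p,q]"]) auto
qed

lemma crown_P_sub_AM:
  assumes n: "n \<ge> 1"
  shows "Pset (crown_X n) (crown_less n) \<subseteq> AMset (crown_X n) (crown_less n)"
proof
  fix \<theta> assume th: "\<theta> \<in> Pset (crown_X n) (crown_less n)"
  then have "\<theta> \<in> bijB (crown_X n) (crown_less n)" unfolding Pset_def by auto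
  then show "\<theta> \<in> AMset (crown_X n) (crown_less n)"
    unfolding AMset_def using crown_Mset[OF n] proper_adm[OF crown_asym th] by auto
qed


definition sw :: "(nat \<times> bool) \<times> (nat \<times> bool) \<Rightarrow> (nat \<times> bool) \<times> (nat \<times> bool)" where
  "sw e = (if e = ((1,False),(1,True)) then ((2,False),(2,True))
           else if e = ((2,False),(2,True)) then ((1,False),(1,True)) else e)"

definition thw :: "nat \<Rightarrow> (nat \<times> bool) \<times> (nat \<times> bool) \<Rightarrow> (nat \<times> bool) \<times> (nat \<times> bool)" where
  "thw n e = (if e \<in> basis (crown_X n) (crown_less n) then sw e else undefined)"

lemma sw_sw: "sw (sw e) = e" unfolding sw_def by auto

lemma sw_basis: "n \<ge> 2 \<Longrightarrow> e \<in> basis (crown_X n) (crown_less n) \<Longrightarrow> sw e \<in> basis (crown_X n) (crown_less n)"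
  unfolding sw_def basis_def crown_less_def crown_X_def by auto

lemma thw_bijB: "n \<ge> 2 \<Longrightarrow> thw n \<in> bijB (crown_X n) (crown_less n)"
  unfolding bijB_def
proof (intro CollectI conjI)
  assume n: "n \<ge> 2"
  show "thw n \<in> extensional (basis (crown_X n) (crown_less n))"
    unfolding thw_def extensional_def by auto
  show "bij_betw (thw n) (basis (crown_X n) (crown_less n)) (basis (crown_X n) (crown_less n))"
    by (rule bij_betw_byWitness[where f'="thw n"])
       (auto simp: thw_def sw_sw sw_basis[OF n])
qed

lemma thw_S:
  assumes n: "n \<ge> 2" and ab: "crown_less n a b"
  shows "(\<exists>w\<in>crown_X n. crown_less n z w \<and> thw n (z,w) = (a,b)) \<longleftrightarrow> fst (sw (a,b)) = z"
proof
  assume "\<exists>w\<in>crown_X n. crown_less n z w \<and> thw n (z,w) = (a,b)"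
  then obtain w where "crown_less n z w" "thw n (z,w) = (a,b)" by blast
  then have "sw (z,w) = (a,b)" unfolding thw_def by (simp add: crown_basis_mem)
  then have "(z,w) = sw (a,b)" using sw_sw by metis
  then show "fst (sw (a,b)) = z" by (metis fst_conv)
next
  assume h: "fst (sw (a,b)) = z"
  have "sw (a,b) \<in> basis (crown_X n) (crown_less n)" using sw_basis[OF n] ab by (simp add: crown_basis_mem)
  then have "crown_less n z (snd (sw (a,b)))" using h by (cases "sw (a,b)") (auto simp: crown_basis_mem)
  moreover have "thw n (z, snd (sw (a,b))) = (a,b)" using h sw_sw[of "(a,b)"] \<open>sw (a,b) \<in> _\<close>
    unfolding thw_def by (cases "sw (a,b)") auto
  ultimately show "\<exists>w\<in>crown_X n. crown_less n z w \<and> thw n (z,w) = (a,b)"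
    unfolding crown_less_def by blast
qed

lemma thw_T:
  assumes n: "n \<ge> 2" and ab: "crown_less n a b"
  shows "(\<exists>w\<in>crown_X n. crown_less n w z \<and> thw n (w,z) = (a,b)) \<longleftrightarrow> snd (sw (a,b)) = z"
proof
  assume "\<exists>w\<in>crown_X n. crown_less n w z \<and> thw n (w,z) = (a,b)"
  then obtain w where "crown_less n w z" "thw n (w,z) = (a,b)" by blast
  then have "sw (w,z) = (a,b)" unfolding thw_def by (simp add: crown_basis_mem)
  then have "(w,z) = sw (a,b)" using sw_sw by metis
  then show "snd (sw (a,b)) = z" by (metis snd_conv)
next
  assume h: "snd (sw (a,b)) = z"
  have "sw (a,b) \<in> basis (crown_X n) (crown_less n)" using sw_basis[OF n] ab by (simp add: crown_basis_mem)
  then have "crown_less n (fst (sw (a,b))) z" using h by (cases "sw (a,b)") (auto simp: crown_basis_mem)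
  moreover have "thw n (fst (sw (a,b)), z) = (a,b)" using h sw_sw[of "(a,b)"] \<open>sw (a,b) \<in> _\<close>
    unfolding thw_def by (cases "sw (a,b)") auto
  ultimately show "\<exists>w\<in>crown_X n. crown_less n w z \<and> thw n (w,z) = (a,b)"
    unfolding crown_less_def by blast
qed

definition gw :: "nat \<times> bool \<Rightarrow> nat \<times> bool \<Rightarrow> int" where
  "gw z v = (if z = (1,False) then - of_bool (v \<in> {(1,False),(1,True),(2,False)})
     else if z = (2,True) then - of_bool (v \<in> {(1,True),(2,False),(2,True)})
     else if z = (1,True) then of_bool (v = (2,False))
     else if z = (2,False) then of_bool (v = (1,True))
     else - of_bool (v = z))"

lemma gw_ok:
  assumes n: "n \<ge> 3" and ab: "crown_less n a b"
  shows "gw z b - gw z a = of_bool (fst (sw (a,b)) = z) - of_bool (snd (sw (a,b)) = z)"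
proof -
  obtain i c j d where a: "a = (i,c)" and b: "b = (j,d)" by (cases a, cases b) auto
  have cd: "\<not> c" "d" "1 \<le> i" "i \<le> n" "1 \<le> j" "j \<le> n" "i = j \<or> i = j + 1 \<or> (i = 1 \<and> j = n)"
    using ab unfolding a b crown_less_def crown_X_def by auto
  show ?thesis using cd n unfolding a b gw_def sw_def by (cases z) auto
qed


lemma thw_adm: assumes n: "n \<ge> 3" shows "admissible (crown_X n) (crown_less n) (thw n)"
proof (rule adm_from_cuts[OF crown_asym])
  fix z assume "z \<in> crown_X n"
  show "\<exists>g::nat \<times> bool \<Rightarrow> int. \<forall>a\<in>crown_X n. \<forall>b\<in>crown_X n. crown_less n a b \<longrightarrow> g b - g a =
     of_bool (\<exists>w\<in>crown_X n. crown_less n z w \<and> thw n (z,w) = (a,b)) -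
     of_bool (\<exists>w\<in>crown_X n. crown_less n w z \<and> thw n (w,z) = (a,b))"
    using n by (intro exI[of _ "gw z"]) (simp add: thw_S thw_T gw_ok)
qed

lemma thw_notP: assumes n: "n \<ge> 3" shows "thw n \<notin> Pset (crown_X n) (crown_less n)"
proof
  assume "thw n \<in> Pset (crown_X n) (crown_less n)"
  then consider
    (aut) \<phi> where "bij_betw \<phi> (crown_X n) (crown_X n)"
          "\<forall>x\<in>crown_X n. \<forall>y\<in>crown_X n. crown_less n x y \<longrightarrow> thw n (x,y) = (\<phi> x, \<phi> y)"
  | (anti) \<phi> where "bij_betw \<phi> (crown_X n) (crown_X n)"
          "\<forall>x\<in>crown_X n. \<forall>y\<in>crown_X n. crown_less n x y \<longrightarrow> thw n (x,y) = (\<phi> y, \<phi> x)"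
    unfolding Pset_def by blast
  then show False
  proof cases
    case aut
    have m: "(1,False) \<in> crown_X n" "(2,False) \<in> crown_X n" "(1,True) \<in> crown_X n"
      using n unfolding crown_X_def by auto
    have l: "crown_less n (1,False) (1,True)" "crown_less n (2,False) (1,True)"
      using n unfolding crown_less_def crown_X_def by auto
    have "thw n ((1,False),(1,True)) = ((2,False),(2,True))" "thw n ((2,False),(1,True)) = ((2,False),(1,True))"
      using l unfolding thw_def sw_def by (auto simp: crown_basis_mem)
    then have "\<phi> (1,False) = (2,False)" "\<phi> (2,False) = (2,False)" using aut(2) m l by force+
    then show False using aut(1) m unfolding bij_betw_def inj_on_def by fastforce
  next
    case anti
    have m: "(2,True) \<in> crown_X n" "(2,False) \<in> crown_X n" "(3,False) \<in> crown_X n"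
      using n unfolding crown_X_def by auto
    have l: "crown_less n (2,False) (2,True)" "crown_less n (3,False) (2,True)"
      using n unfolding crown_less_def crown_X_def by auto
    have "thw n ((2,False),(2,True)) = ((1,False),(1,True))" "thw n ((3,False),(2,True)) = ((3,False),(2,True))"
      using l unfolding thw_def sw_def by (auto simp: crown_basis_mem)
    then have "\<phi> (2,True) = (1,False)" "\<phi> (2,True) = (3,False)" using anti(2) m l by force+
    then show False by simp
  qed
qed

lemma crown_neq: assumes n: "n > 2"
  shows "Pset (crown_X n) (crown_less n) \<noteq> AMset (crown_X n) (crown_less n)"
proof
  have n3: "n \<ge> 3" using n by simp
  have "thw n \<in> AMset (crown_X n) (crown_less n)"
    unfolding AMset_def using crown_Mset thw_bijB thw_adm n3 by auto
  moreover assume "Pset (crown_X n) (crown_less n) = AMset (crown_X n) (crown_less n)"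
  ultimately show False using thw_notP[OF n3] by simp
qed


lemma X2: "crown_X 2 = {(1,False),(1,True),(2,False),(2,True)}"
  unfolding crown_X_def by auto

lemma lt2: "crown_less 2 a b \<longleftrightarrow> (a,b) \<in> {((1,False),(1,True)),((2,False),(1,True)),((2,False),(2,True)),((1,False),(2,True))}"
  unfolding crown_less_def crown_X_def by (cases a, cases b) auto

definition W0 :: "(nat \<times> bool) list" where
  "W0 = [(1,False),(1,True),(2,False),(2,True),(1,False)]"

lemma covers2: "covers (crown_X 2) (crown_less 2) a b \<longleftrightarrow> crown_less 2 a b"
  unfolding covers_def using crown_asym by (auto simp: crown_less_def)

lemma walk2: "closed_walk (crown_X 2) (crown_less 2) W0"
  unfolding closed_walk_def covers2 W0_def
  by (auto simp: X2 lt2 less_Suc_eq nth_Cons split: nat.splits)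

lemma lt_Suc4: "Suc i < length W0 \<longleftrightarrow> i = 0 \<or> i = 1 \<or> i = 2 \<or> i = 3"
  unfolding W0_def by auto

lemma up_card: "card {i. Suc i < length W0 \<and> crown_less 2 (W0!i) (W0!Suc i) \<and> R (W0!i) (W0!Suc i)}
   = of_bool (R (1,False) (1,True)) + of_bool (R (2,False) (2,True))"
proof -
  have "{i. Suc i < length W0 \<and> crown_less 2 (W0!i) (W0!Suc i) \<and> R (W0!i) (W0!Suc i)}
     = (if R (1,False) (1,True) then {0} else {}) \<union> (if R (2,False) (2,True) then {2} else {})"
    unfolding lt_Suc4 by (auto simp: W0_def lt2)
  then show ?thesis by auto
qed

lemma down_card: "card {i. Suc i < length W0 \<and> crown_less 2 (W0!Suc i) (W0!i) \<and> R (W0!Suc i) (W0!i)}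
   = of_bool (R (2,False) (1,True)) + of_bool (R (1,False) (2,True))"
proof -
  have "{i. Suc i < length W0 \<and> crown_less 2 (W0!Suc i) (W0!i) \<and> R (W0!Suc i) (W0!i)}
     = (if R (2,False) (1,True) then {1} else {}) \<union> (if R (1,False) (2,True) then {3} else {})"
    unfolding lt_Suc4 by (auto simp: W0_def lt2)
  then show ?thesis by auto
qed


lemma adm2:
  assumes adm: "admissible (crown_X 2) (crown_less 2) \<theta>" and z: "z \<in> crown_X 2"
  shows "int (of_bool (\<exists>w\<in>crown_X 2. crown_less 2 z w \<and> \<theta> (z,w) = ((1,False),(1,True)))
             + of_bool (\<exists>w\<in>crown_X 2. crown_less 2 z w \<and> \<theta> (z,w) = ((2,False),(2,True))))
       - int (of_bool (\<exists>w\<in>crown_X 2. crown_less 2 z w \<and> \<theta> (z,w) = ((2,False),(1,True)))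
             + of_bool (\<exists>w\<in>crown_X 2. crown_less 2 z w \<and> \<theta> (z,w) = ((1,False),(2,True))))
       = int (of_bool (\<exists>w\<in>crown_X 2. crown_less 2 w z \<and> \<theta> (w,z) = ((1,False),(1,True)))
             + of_bool (\<exists>w\<in>crown_X 2. crown_less 2 w z \<and> \<theta> (w,z) = ((2,False),(2,True))))
       - int (of_bool (\<exists>w\<in>crown_X 2. crown_less 2 w z \<and> \<theta> (w,z) = ((2,False),(1,True)))
             + of_bool (\<exists>w\<in>crown_X 2. crown_less 2 w z \<and> \<theta> (w,z) = ((1,False),(2,True))))"
proof -
  have "int (s_plus (crown_X 2) (crown_less 2) \<theta> W0 z) - int (s_minus (crown_X 2) (crown_less 2) \<theta> W0 z) =
        int (t_plus (crown_X 2) (crown_less 2) \<theta> W0 z) - int (t_minus (crown_X 2) (crown_less 2) \<theta> W0 z)"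
    using adm walk2 z unfolding admissible_def by blast
  then show ?thesis
    unfolding s_plus_def s_minus_def t_plus_def t_minus_def
      up_card[of "\<lambda>a b. \<exists>w\<in>crown_X 2. crown_less 2 z w \<and> \<theta> (z,w) = (a,b)"]
      down_card[of "\<lambda>a b. \<exists>w\<in>crown_X 2. crown_less 2 z w \<and> \<theta> (z,w) = (a,b)"]
      up_card[of "\<lambda>a b. \<exists>w\<in>crown_X 2. crown_less 2 w z \<and> \<theta> (w,z) = (a,b)"]
      down_card[of "\<lambda>a b. \<exists>w\<in>crown_X 2. crown_less 2 w z \<and> \<theta> (w,z) = (a,b)"]
    by simp
qed

lemma basis2: "basis (crown_X 2) (crown_less 2) = {((1,False),(1,True)),((2,False),(1,True)),((2,False),(2,True)),((1,False),(2,True))}"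
  unfolding basis_def lt2 by (auto simp: X2)


definition sp :: "bool \<Rightarrow> nat \<Rightarrow> nat" where "sp b i = (if b then 3 - i else i)"
definition pa :: "bool \<Rightarrow> bool \<Rightarrow> nat \<times> bool \<Rightarrow> nat \<times> bool" where
  "pa s t v = (if snd v then (sp t (fst v), True) else (sp s (fst v), False))"
definition pn :: "bool \<Rightarrow> bool \<Rightarrow> nat \<times> bool \<Rightarrow> nat \<times> bool" where
  "pn s t v = (if snd v then (sp t (fst v), False) else (sp s (fst v), True))"

lemma bij_pa: "bij_betw (pa s t) (crown_X 2) (crown_X 2)"
  by (rule bij_betw_byWitness[where f'="pa s t"]) (auto simp: X2 pa_def sp_def)
lemma bij_pn: "bij_betw (pn s t) (crown_X 2) (crown_X 2)"
  by (rule bij_betw_byWitness[where f'="pn t s"]) (auto simp: X2 pn_def sp_def)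

lemma pset_aut:
  assumes "\<theta> \<in> bijB (crown_X 2) (crown_less 2)"
    and "\<And>x y. crown_less 2 x y \<Longrightarrow> \<theta> (x,y) = (pa s t x, pa s t y)"
  shows "\<theta> \<in> Pset (crown_X 2) (crown_less 2)"
proof -
  have "\<forall>x\<in>crown_X 2. \<forall>y\<in>crown_X 2. crown_less 2 x y \<longleftrightarrow> crown_less 2 (pa s t x) (pa s t y)"
    unfolding X2 lt2 by (cases s; cases t) (auto simp: pa_def sp_def)
  then show ?thesis unfolding Pset_def using assms bij_pa by blast
qed

lemma pset_anti:
  assumes "\<theta> \<in> bijB (crown_X 2) (crown_less 2)"
    and "\<And>x y. crown_less 2 x y \<Longrightarrow> \<theta> (x,y) = (pn s t y, pn s t x)"
  shows "\<theta> \<in> Pset (crown_X 2) (crown_less 2)"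
proof -
  have "\<forall>x\<in>crown_X 2. \<forall>y\<in>crown_X 2. crown_less 2 x y \<longleftrightarrow> crown_less 2 (pn s t y) (pn s t x)"
    unfolding X2 lt2 by (cases s; cases t) (auto simp: pn_def sp_def)
  then show ?thesis unfolding Pset_def using assms bij_pn by blast
qed


lemma final2:
  assumes bij: "\<theta> \<in> bijB (crown_X 2) (crown_less 2)"
  and e1: "\<theta> ((1,False),(1,True)) = t1" and e2: "\<theta> ((2,False),(2,True)) = t2"
  and e3: "\<theta> ((2,False),(1,True)) = t3" and e4: "\<theta> ((1,False),(2,True)) = t4"
  and m: "t1 \<in> basis (crown_X 2) (crown_less 2)" "t2 \<in> basis (crown_X 2) (crown_less 2)"
         "t3 \<in> basis (crown_X 2) (crown_less 2)" "t4 \<in> basis (crown_X 2) (crown_less 2)"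
  and d: "t1 \<noteq> t2" "t1 \<noteq> t3" "t1 \<noteq> t4" "t2 \<noteq> t3" "t2 \<noteq> t4" "t3 \<noteq> t4"
  and c1: "int (of_bool (t1 = ((1,False),(1,True)) \<or> t4 = ((1,False),(1,True))) + of_bool (t1 = ((2,False),(2,True)) \<or> t4 = ((2,False),(2,True))))
         - int (of_bool (t1 = ((2,False),(1,True)) \<or> t4 = ((2,False),(1,True))) + of_bool (t1 = ((1,False),(2,True)) \<or> t4 = ((1,False),(2,True)))) = 0"
  and c2: "int (of_bool (t2 = ((1,False),(1,True)) \<or> t3 = ((1,False),(1,True))) + of_bool (t2 = ((2,False),(2,True)) \<or> t3 = ((2,False),(2,True))))
         - int (of_bool (t2 = ((2,False),(1,True)) \<or> t3 = ((2,False),(1,True))) + of_bool (t2 = ((1,False),(2,True)) \<or> t3 = ((1,False),(2,True)))) = 0"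
  and c3: "0 = int (of_bool (t1 = ((1,False),(1,True)) \<or> t3 = ((1,False),(1,True))) + of_bool (t1 = ((2,False),(2,True)) \<or> t3 = ((2,False),(2,True))))
         - int (of_bool (t1 = ((2,False),(1,True)) \<or> t3 = ((2,False),(1,True))) + of_bool (t1 = ((1,False),(2,True)) \<or> t3 = ((1,False),(2,True))))"
  and c4: "0 = int (of_bool (t2 = ((1,False),(1,True)) \<or> t4 = ((1,False),(1,True))) + of_bool (t2 = ((2,False),(2,True)) \<or> t4 = ((2,False),(2,True))))
         - int (of_bool (t2 = ((2,False),(1,True)) \<or> t4 = ((2,False),(1,True))) + of_bool (t2 = ((1,False),(2,True)) \<or> t4 = ((1,False),(2,True))))"
  shows "\<theta> \<in> Pset (crown_X 2) (crown_less 2)"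
  using m d c1 c2 c3 c4 e1 e2 e3 e4 unfolding basis2
  apply (simp only: insert_iff empty_iff simp_thms)
  apply (elim disjE)
  apply (simp_all only: prod.inject)
  apply simp_all
  apply ((rule pset_aut[OF bij, of False False]; force simp: lt2 pa_def sp_def)
    | (rule pset_aut[OF bij, of False True]; force simp: lt2 pa_def sp_def)
    | (rule pset_aut[OF bij, of True False]; force simp: lt2 pa_def sp_def)
    | (rule pset_aut[OF bij, of True True]; force simp: lt2 pa_def sp_def)
    | (rule pset_anti[OF bij, of False False]; force simp: lt2 pn_def sp_def)
    | (rule pset_anti[OF bij, of False True]; force simp: lt2 pn_def sp_def)
    | (rule pset_anti[OF bij, of True False]; force simp: lt2 pn_def sp_def)
    | (rule pset_anti[OF bij, of True True]; force simp: lt2 pn_def sp_def))+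
  done

lemma am2:
  assumes th: "\<theta> \<in> AMset (crown_X 2) (crown_less 2)"
  shows "\<theta> \<in> Pset (crown_X 2) (crown_less 2)"
proof -
  have bij: "\<theta> \<in> bijB (crown_X 2) (crown_less 2)" and adm: "admissible (crown_X 2) (crown_less 2) \<theta>"
    using th unfolding AMset_def Mset_def by auto
  define t1 where "t1 = \<theta> ((1,False),(1,True))"
  define t2 where "t2 = \<theta> ((2,False),(2,True))"
  define t3 where "t3 = \<theta> ((2,False),(1,True))"
  define t4 where "t4 = \<theta> ((1,False),(2,True))"
  have bb: "bij_betw \<theta> (basis (crown_X 2) (crown_less 2)) (basis (crown_X 2) (crown_less 2))"
    using bij unfolding bijB_def by auto
  have im: "\<theta> e \<in> basis (crown_X 2) (crown_less 2)" if "e \<in> basis (crown_X 2) (crown_less 2)" for e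
    using bb that unfolding bij_betw_def by auto
  have inj: "inj_on \<theta> (basis (crown_X 2) (crown_less 2))" using bb unfolding bij_betw_def by auto
  have mem: "((1,False),(1,True)) \<in> basis (crown_X 2) (crown_less 2)" "((2,False),(2,True)) \<in> basis (crown_X 2) (crown_less 2)"
     "((2,False),(1,True)) \<in> basis (crown_X 2) (crown_less 2)" "((1,False),(2,True)) \<in> basis (crown_X 2) (crown_less 2)"
    unfolding basis2 by auto
  have m: "t1 \<in> basis (crown_X 2) (crown_less 2)" "t2 \<in> basis (crown_X 2) (crown_less 2)"
         "t3 \<in> basis (crown_X 2) (crown_less 2)" "t4 \<in> basis (crown_X 2) (crown_less 2)"
    unfolding t1_def t2_def t3_def t4_def using im mem by auto
  have dd: "\<theta> a \<noteq> \<theta> b" if "a \<in> basis (crown_X 2) (crown_less 2)" "b \<in> basis (crown_X 2) (crown_less 2)" "a \<noteq> b" for a b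
    using inj that unfolding inj_on_def by blast
  have d: "t1 \<noteq> t2" "t1 \<noteq> t3" "t1 \<noteq> t4" "t2 \<noteq> t3" "t2 \<noteq> t4" "t3 \<noteq> t4"
    unfolding t1_def t2_def t3_def t4_def
    apply (rule dd[OF mem(1) mem(2)], simp) apply (rule dd[OF mem(1) mem(3)], simp) apply (rule dd[OF mem(1) mem(4)], simp)
    apply (rule dd[OF mem(2) mem(3)], simp) apply (rule dd[OF mem(2) mem(4)], simp) apply (rule dd[OF mem(3) mem(4)], simp)
    done
  have c1: "int (of_bool (t1 = ((1,False),(1,True)) \<or> t4 = ((1,False),(1,True))) + of_bool (t1 = ((2,False),(2,True)) \<or> t4 = ((2,False),(2,True)))) - int (of_bool (t1 = ((2,False),(1,True)) \<or> t4 = ((2,False),(1,True))) + of_bool (t1 = ((1,False),(2,True)) \<or> t4 = ((1,False),(2,True)))) = 0"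
  proof -
    have h1: "(\<exists>w\<in>crown_X 2. crown_less 2 (1,False) w \<and> \<theta> ((1,False),w) = e) \<longleftrightarrow> (t1 = e \<or> t4 = e)" for e
      unfolding X2 lt2 t1_def t4_def by auto
    have h2: "(\<exists>w\<in>crown_X 2. crown_less 2 w (1,False) \<and> \<theta> (w,(1,False)) = e) \<longleftrightarrow> False" for e
      unfolding crown_less_def by auto
    have zin: "(1,False) \<in> crown_X 2" by (simp add: X2)
    show ?thesis using adm2[OF adm zin, unfolded h1 h2]
      by (simp only: of_bool_eq(1) add_0 of_nat_0 diff_self)
  qed
  have c2: "int (of_bool (t2 = ((1,False),(1,True)) \<or> t3 = ((1,False),(1,True))) + of_bool (t2 = ((2,False),(2,True)) \<or> t3 = ((2,False),(2,True)))) - int (of_bool (t2 = ((2,False),(1,True)) \<or> t3 = ((2,False),(1,True))) + of_bool (t2 = ((1,False),(2,True)) \<or> t3 = ((1,False),(2,True)))) = 0"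
  proof -
    have h1: "(\<exists>w\<in>crown_X 2. crown_less 2 (2,False) w \<and> \<theta> ((2,False),w) = e) \<longleftrightarrow> (t2 = e \<or> t3 = e)" for e
      unfolding X2 lt2 t2_def t3_def by auto
    have h2: "(\<exists>w\<in>crown_X 2. crown_less 2 w (2,False) \<and> \<theta> (w,(2,False)) = e) \<longleftrightarrow> False" for e
      unfolding crown_less_def by auto
    have zin: "(2,False) \<in> crown_X 2" by (simp add: X2)
    show ?thesis using adm2[OF adm zin, unfolded h1 h2]
      by (simp only: of_bool_eq(1) add_0 of_nat_0 diff_self)
  qed
  have c3: "0 = int (of_bool (t1 = ((1,False),(1,True)) \<or> t3 = ((1,False),(1,True))) + of_bool (t1 = ((2,False),(2,True)) \<or> t3 = ((2,False),(2,True)))) - int (of_bool (t1 = ((2,False),(1,True)) \<or> t3 = ((2,False),(1,True))) + of_bool (t1 = ((1,False),(2,True)) \<or> t3 = ((1,False),(2,True))))"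
  proof -
    have h1: "(\<exists>w\<in>crown_X 2. crown_less 2 w (1,True) \<and> \<theta> (w,(1,True)) = e) \<longleftrightarrow> (t1 = e \<or> t3 = e)" for e
      unfolding X2 lt2 t1_def t3_def by auto
    have h2: "(\<exists>w\<in>crown_X 2. crown_less 2 (1,True) w \<and> \<theta> ((1,True),w) = e) \<longleftrightarrow> False" for e
      unfolding crown_less_def by auto
    have zin: "(1,True) \<in> crown_X 2" by (simp add: X2)
    show ?thesis using adm2[OF adm zin, unfolded h1 h2]
      by (simp only: of_bool_eq(1) add_0 of_nat_0 diff_self)
  qed
  have c4: "0 = int (of_bool (t2 = ((1,False),(1,True)) \<or> t4 = ((1,False),(1,True))) + of_bool (t2 = ((2,False),(2,True)) \<or> t4 = ((2,False),(2,True)))) - int (of_bool (t2 = ((2,False),(1,True)) \<or> t4 = ((2,False),(1,True))) + of_bool (t2 = ((1,False),(2,True)) \<or> t4 = ((1,False),(2,True))))"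
  proof -
    have h1: "(\<exists>w\<in>crown_X 2. crown_less 2 w (2,True) \<and> \<theta> (w,(2,True)) = e) \<longleftrightarrow> (t2 = e \<or> t4 = e)" for e
      unfolding X2 lt2 t2_def t4_def by auto
    have h2: "(\<exists>w\<in>crown_X 2. crown_less 2 (2,True) w \<and> \<theta> ((2,True),w) = e) \<longleftrightarrow> False" for e
      unfolding crown_less_def by auto
    have zin: "(2,True) \<in> crown_X 2" by (simp add: X2)
    show ?thesis using adm2[OF adm zin, unfolded h1 h2]
      by (simp only: of_bool_eq(1) add_0 of_nat_0 diff_self)
  qed
  show ?thesis
    by (rule final2[OF bij t1_def[symmetric] t2_def[symmetric] t3_def[symmetric] t4_def[symmetric] m d c1 c2 c3 c4])
qed

theorem corollary4p12:
  shows "Pset (crown_X 2) (crown_less 2) = AMset (crown_X 2) (crown_less 2) \<and>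
    (\<forall>n::nat. n > 2 \<longrightarrow> Pset (crown_X n) (crown_less n) \<noteq> AMset (crown_X n) (crown_less n))"
  using crown_P_sub_AM[of 2] am2 crown_neq by auto

end
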